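(* In the setting of the SigSAS system with $0<\lambda<\min\{1,1/\widetilde M\}$, there exists a linear map $A_{\lambda,l,p}:T^{l+1}(\mathbb R^{p+1})\to T^{l+1}(\mathbb R^{p+1})$ whose matrix in the canonical basis is invertible and has nonnegative entries, such that $U^{\rm SigSAS}_{\lambda,l,p}(\mathbf z)_t=A_{\lambda,l,p}\widehat{\mathbf z}_t$ for all $\mathbf z\in K_M$ and $t\in\mathbb Z_-$.
   Context: $M>0$, $l,p\in\mathbb N$, $\widetilde M=\sum_{j=0}^pM^j$, $K_M=[-M,M]^{\mathbb Z_-}$. $T^{l+1}(\mathbb R^{p+1})=(\mathbb R^{p+1})^{\otimes(l+1)}$ with canonical basis $\mathbf e_{i_1}\otimes\cdots\otimes\mathbf e_{i_{l+1}}$ and Euclidean norm of coefficients. $\pi_l:T^{l+1}(\mathbb R^{p+1})\to T^{l}(\mathbb R^{p+1})$ is the linear map $\pi_l(\sum a_{i_1\dots i_{l+1}}\mathbf e_{i_1}\otimes\cdots\otimes\mathbf e_{i_{l+1}})=\sum a_{1,i_2\dots i_{l+1}}\mathbf e_{i_2}\otimes\cdots\otimes\mathbf e_{i_{l+1}}$. For $z\in\mathbb R$, $\widetilde{\mathbf z}=\sum_{i=1}^{p+1}z^{i-1}\mathbf e_i$; for a sequence, $\widetilde{\mathbf z}_t$ corresponds to $z_t$ and $\widehat{\mathbf z}_t=\widetilde{\mathbf z}_{t-l}\otimes\cdots\otimes\widetilde{\mathbf z}_t$. Fix $I_0\subset\{1,\dots,p+1\}$ with $1\in I_0$, $|I_0|>1$,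 and $\widehat{\mathbf z}^0=\sum_{i\in I_0}z^{i-1}\mathbf e_1^{\otimes l}\otimes\mathbf e_i$. $U^{\rm SigSAS}_{\lambda,l,p}$ is the unique (echo state) solution filter of $\mathbf x_t=\lambda\pi_l(\mathbf x_{t-1})\otimes\widetilde{\mathbf z}_t+\widehat{\mathbf z}^0_t$ with uniformly bounded states. *)

theory Defs
  imports "HOL-Analysis.Analysis"
begin

(* Tensors in T^k(R^{p+1}) are represented by their coefficient functions
   on multi-indices: lists of length k with entries in {0..p}; index i
   stands for the basis vector e_{i+1}.  Coefficients outside this index
   set are irrelevant and kept 0 by all constructions. *)

definition tidx :: "nat \<Rightarrow> nat \<Rightarrow> nat list set" where
  "tidx p k = {is. length is = k \<and> set is \<subseteq> {0..p}}"

type_synonym tensor = "nat list \<Rightarrow> real"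

definition tnorm :: "nat \<Rightarrow> nat \<Rightarrow> tensor \<Rightarrow> real" where
  "tnorm p k x = sqrt (\<Sum>is\<in>tidx p k. (x is)^2)"

(* hat z_t = tilde z_{t-l} \<otimes> ... \<otimes> tilde z_t, tilde z = sum_i z^i e_{i+1} *)
definition zhat :: "nat \<Rightarrow> nat \<Rightarrow> (int \<Rightarrow> real) \<Rightarrow> int \<Rightarrow> tensor" where
  "zhat l p z t = (\<lambda>is. if is \<in> tidx p (l+1)
       then (\<Prod>j<l+1. (z (t - int l + int j)) ^ (is ! j)) else 0)"

(* hat z^0 = sum_{i in I0} z^i e_1^{\<otimes> l} \<otimes> e_{i+1}  (0-based I0) *)
definition zhat0 :: "nat \<Rightarrow> nat \<Rightarrow> nat set \<Rightarrow> real \<Rightarrow> tensor" where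
  "zhat0 l p I0 w = (\<lambda>is. if is \<in> tidx p (l+1) \<and> (\<exists>i\<in>I0. is = replicate l 0 @ [i])
       then w ^ (last is) else 0)"

definition proj :: "tensor \<Rightarrow> tensor" where
  "proj x = (\<lambda>is. x (0 # is))"

(* x \<otimes> tilde w for x in T^l *)
definition tensor_vec :: "nat \<Rightarrow> nat \<Rightarrow> tensor \<Rightarrow> real \<Rightarrow> tensor" where
  "tensor_vec l p x w = (\<lambda>is. if is \<in> tidx p (l+1)
       then x (butlast is) * w ^ (last is) else 0)"

definition sigsas_solution ::
  "real \<Rightarrow> nat \<Rightarrow> nat \<Rightarrow> nat set \<Rightarrow> (int \<Rightarrow> real) \<Rightarrow> (int \<Rightarrow> tensor) \<Rightarrow> bool" where
  "sigsas_solution lam l p I0 z x \<longleftrightarrow>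
     (\<forall>t\<le>0. x t = (\<lambda>is. lam * tensor_vec l p (proj (x (t - 1))) (z t) is
                           + zhat0 l p I0 (z t) is)) \<and>
     (\<exists>C. \<forall>t\<le>0. tnorm p (l+1) (x t) \<le> C)"

definition U_sigsas ::
  "real \<Rightarrow> nat \<Rightarrow> nat \<Rightarrow> nat set \<Rightarrow> (int \<Rightarrow> real) \<Rightarrow> int \<Rightarrow> tensor" where
  "U_sigsas lam l p I0 z t = (THE v. \<exists>x. sigsas_solution lam l p I0 z x \<and> x t = v)"

definition KM :: "real \<Rightarrow> (int \<Rightarrow> real) set" where
  "KM M = {z. \<forall>t\<le>0. \<bar>z t\<bar> \<le> M}"

definition Mtilde :: "real \<Rightarrow> nat \<Rightarrow> real" where
  "Mtilde M p = (\<Sum>j\<le>p. M ^ j)"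

definition matapply :: "nat \<Rightarrow> nat \<Rightarrow> (nat list \<Rightarrow> nat list \<Rightarrow> real) \<Rightarrow> tensor \<Rightarrow> tensor" where
  "matapply p k a v = (\<lambda>is. if is \<in> tidx p k then (\<Sum>js\<in>tidx p k. a is js * v js) else 0)"

definition mat_invertible :: "nat \<Rightarrow> nat \<Rightarrow> (nat list \<Rightarrow> nat list \<Rightarrow> real) \<Rightarrow> bool" where
  "mat_invertible p k a \<longleftrightarrow> (\<exists>b.
     (\<forall>is\<in>tidx p k. \<forall>ks\<in>tidx p k. (\<Sum>js\<in>tidx p k. a is js * b js ks) = (if is = ks then 1 else 0)) \<and>
     (\<forall>is\<in>tidx p k. \<forall>ks\<in>tidx p k. (\<Sum>js\<in>tidx p k. b is js * a js ks) = (if is = ks then 1 else 0)))"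

end

theory Submission
  imports Defs
begin

definition sh :: "nat list \<Rightarrow> nat list" where
  "sh ys = take (length ys) (0 # ys)"

definition Dind :: "nat \<Rightarrow> nat set \<Rightarrow> nat list \<Rightarrow> real" where
  "Dind l I0 is = (if \<exists>i\<in>I0. is = replicate l 0 @ [i] then 1 else 0)"

definition cc :: "real \<Rightarrow> nat \<Rightarrow> nat set \<Rightarrow> nat list \<Rightarrow> real" where
  "cc lam l I0 is = (\<Sum>k\<le>l. lam^k * Dind l I0 ((sh^^k) is)) + lam^(l+1)/(1-lam)"

lemma length_sh[simp]: "length (sh ys) = length ys"
  by (simp add: sh_def)

lemma length_sh_pow[simp]: "length ((sh^^n) xs) = length xs"
  by (induction n) auto

lemma take_cons_take: "take L (0 # take L ys) = take L (0 # (ys::nat list))"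
  by (cases L) auto

lemma sh_pow: "(sh^^n) xs = take (length xs) (replicate n 0 @ xs)"
proof (induction n)
  case 0 then show ?case by simp
next
  case (Suc n)
  have "(sh^^Suc n) xs = take (length xs) (0 # (sh^^n) xs)"
    by (simp add: sh_def)
  also have "\<dots> = take (length xs) (0 # take (length xs) (replicate n 0 @ xs))"
    by (simp only: Suc)
  also have "\<dots> = take (length xs) (replicate (Suc n) 0 @ xs)"
    by (simp only: take_cons_take) simp
  finally show ?case .
qed

lemma sh_full: "length xs = n \<Longrightarrow> (sh^^n) xs = replicate n 0"
  by (simp add: sh_pow)

lemma sh_nonempty: "xs \<noteq> [] \<Longrightarrow> sh xs = 0 # butlast xs"
  by (cases xs) (simp_all add: sh_def butlast_conv_take)

lemma cc_rec:
  assumes "length is = l+1" "0 \<in> I0" "lam \<noteq> 1"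
  shows "cc lam l I0 is = lam * cc lam l I0 (sh is) + Dind l I0 is"
proof -
  define S where "S = (\<Sum>k\<le>l. lam^k * Dind l I0 ((sh^^k) is))"
  define S' where "S' = (\<Sum>k\<le>l. lam^k * Dind l I0 ((sh^^k) (sh is)))"
  have D1: "Dind l I0 ((sh^^(Suc l)) is) = 1"
    using assms by (simp add: sh_full Dind_def replicate_append_same[symmetric] del: funpow.simps)
  have a: "(\<Sum>k\<le>Suc l. lam^k * Dind l I0 ((sh^^k) is)) = Dind l I0 is + lam * S'"
    unfolding S'_def sum.atMost_Suc_shift
    by (simp add: sum_distrib_left funpow_Suc_right mult.assoc del: funpow.simps)
  have b: "(\<Sum>k\<le>Suc l. lam^k * Dind l I0 ((sh^^k) is)) = S + lam^(Suc l)"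
    unfolding S_def using D1 by (simp del: funpow.simps)
  have "lam * S' = S + lam^(Suc l) - Dind l I0 is" using a b by simp
  define A where "A = lam^(l+1) / (1-lam)"
  have "A = lam^(l+1) + lam * A"
    using assms(3) by (simp add: field_simps A_def)
  moreover have "cc lam l I0 is = S + A" "cc lam l I0 (sh is) = S' + A"
    by (simp_all add: cc_def S_def S'_def A_def)
  moreover have "lam * (S' + A) = lam * S' + lam * A" by (simp add: distrib_left)
  ultimately show ?thesis using \<open>lam * S' = S + lam^(Suc l) - Dind l I0 is\<close> by simp
qed

lemma cc_pos:
  assumes "0 < lam" "lam < 1"
  shows "cc lam l I0 is > 0"
proof -
  have "(\<Sum>k\<le>l. lam^k * Dind l I0 ((sh^^k) is)) \<ge> 0"
    using assms by (intro sum_nonneg) (simp add: Dind_def)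
  moreover have "lam^(l+1)/(1-lam) > 0" using assms by simp
  ultimately show ?thesis unfolding cc_def by linarith
qed

lemma tidx_finite: "finite (tidx p k)"
proof -
  have "tidx p k = {xs. set xs \<subseteq> {0..p} \<and> length xs = k}"
    unfolding tidx_def by auto
  then show ?thesis using finite_lists_length_eq[of "{0..p}" k] by simp
qed

lemma coord_le_tnorm:
  assumes "is \<in> tidx p k"
  shows "\<bar>x is\<bar> \<le> tnorm p k x"
proof -
  have "(x is)^2 \<le> (\<Sum>js\<in>tidx p k. (x js)^2)"
    using assms tidx_finite by (intro member_le_sum) auto
  then have "sqrt ((x is)^2) \<le> tnorm p k x"
    unfolding tnorm_def using real_sqrt_le_mono by blast
  then show ?thesis by simp
qed

lemma tidx_sh:
  assumes "is \<in> tidx p (l+1)"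
  shows "0 # butlast is \<in> tidx p (l+1)"
  using assms unfolding tidx_def by (auto dest: in_set_butlastD)

lemma last_tidx:
  assumes "is \<in> tidx p (l+1)"
  shows "last is \<le> p"
proof -
  have "is \<noteq> []" using assms by (auto simp: tidx_def)
  then have "last is \<in> set is" by simp
  then show ?thesis using assms by (auto simp: tidx_def)
qed

lemma Mtilde_ge1: "M > 0 \<Longrightarrow> Mtilde M p \<ge> 1"
proof -
  assume "M > 0"
  then have "M^0 \<le> (\<Sum>j\<le>p. M^j)" by (intro member_le_sum) auto
  then show ?thesis by (simp add: Mtilde_def)
qed

lemma pow_le_Mtilde:
  assumes "M > 0" "\<bar>w\<bar> \<le> M" "i \<le> p"
  shows "\<bar>w\<bar>^i \<le> Mtilde M p"
proof -
  have "\<bar>w\<bar>^i \<le> M^i" using assms by (intro power_mono) auto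
  also have "\<dots> \<le> (\<Sum>j\<le>p. M^j)" using assms by (intro member_le_sum) auto
  finally show ?thesis by (simp add: Mtilde_def)
qed

lemma sol_eq:
  assumes "sigsas_solution lam l p I0 z x" "t \<le> 0"
  shows "x t is = (if is \<in> tidx p (l+1) then lam * x (t-1) (0 # butlast is) * z t ^ last is else 0)
                 + zhat0 l p I0 (z t) is"
proof -
  have "x t = (\<lambda>is. lam * tensor_vec l p (proj (x (t - 1))) (z t) is + zhat0 l p I0 (z t) is)"
    using assms unfolding sigsas_solution_def by blast
  then show ?thesis by (simp add: tensor_vec_def proj_def)
qed

lemma sol_out:
  assumes "sigsas_solution lam l p I0 z x" "t \<le> 0" "is \<notin> tidx p (l+1)"
  shows "x t is = 0"
  using sol_eq[OF assms(1,2)] assms(3) by (simp add: zhat0_def)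

lemma le_zero_lim:
  fixes a q C :: real
  assumes "\<And>n. a \<le> q^n * C" "0 \<le> q" "q < 1"
  shows "a \<le> 0"
proof -
  have "(\<lambda>n. q^n * C) \<longlonglongrightarrow> 0 * C"
    using assms by (intro tendsto_mult LIMSEQ_power_zero tendsto_const) auto
  then show ?thesis using assms(1) by (intro LIMSEQ_le_const) auto
qed

lemma uniq:
  assumes "z \<in> KM M" "M > 0" "0 < lam" "lam * Mtilde M p < 1"
    and sx: "sigsas_solution lam l p I0 z x" and sy: "sigsas_solution lam l p I0 z y"
    and "t \<le> 0"
  shows "x t = y t"
proof -
  obtain Cx where Cx: "\<forall>t\<le>0. tnorm p (l+1) (x t) \<le> Cx" using sx unfolding sigsas_solution_def by blast
  obtain Cy where Cy: "\<forall>t\<le>0. tnorm p (l+1) (y t) \<le> Cy" using sy unfolding sigsas_solution_def by blast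
  define q where "q = lam * Mtilde M p"
  define C where "C = Cx + Cy"
  have Mt: "Mtilde M p \<ge> 1" using Mtilde_ge1 assms by blast
  have zb: "\<And>t i. t \<le> 0 \<Longrightarrow> i \<le> p \<Longrightarrow> \<bar>z t\<bar>^i \<le> Mtilde M p"
    using assms(1,2) by (intro pow_le_Mtilde) (auto simp: KM_def)
  have claim: "\<forall>t\<le>0. \<forall>is\<in>tidx p (l+1). \<bar>x t is - y t is\<bar> \<le> q^n * C" for n
  proof (induction n)
    case 0
    show ?case
    proof (intro allI impI ballI)
      fix t :: int and "is" assume "t \<le> 0" "is \<in> tidx p (l+1)"
      then have "\<bar>x t is\<bar> \<le> Cx" "\<bar>y t is\<bar> \<le> Cy"
        using coord_le_tnorm Cx Cy by (meson order_trans)+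
      then show "\<bar>x t is - y t is\<bar> \<le> q^0 * C" by (simp add: C_def)
    qed
  next
    case (Suc n)
    show ?case
    proof (intro allI impI ballI)
      fix t :: int and "is" assume t: "t \<le> 0" and i: "is \<in> tidx p (l+1)"
      let ?js = "0 # butlast is"
      have "x t is - y t is = lam * (x (t-1) ?js - y (t-1) ?js) * z t ^ last is"
        using sol_eq[OF sx t, of "is"] sol_eq[OF sy t, of "is"] i by (simp add: algebra_simps)
      then have e: "\<bar>x t is - y t is\<bar> = lam * \<bar>x (t-1) ?js - y (t-1) ?js\<bar> * \<bar>z t\<bar> ^ last is"
        using assms(3) by (simp add: abs_mult power_abs)
      have h1: "\<bar>x (t-1) ?js - y (t-1) ?js\<bar> \<le> q^n * C"
        using Suc t tidx_sh[OF i] by simp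
      have h2: "\<bar>z t\<bar> ^ last is \<le> Mtilde M p" using zb t last_tidx[OF i] by blast
      have "lam * \<bar>x (t-1) ?js - y (t-1) ?js\<bar> * \<bar>z t\<bar> ^ last is \<le> lam * (q^n * C) * Mtilde M p"
        using h1 h2 assms(3) by (intro mult_mono mult_left_mono) auto
      also have "\<dots> = q^Suc n * C" by (simp add: q_def algebra_simps)
      finally show "\<bar>x t is - y t is\<bar> \<le> q^Suc n * C" using e by simp
    qed
  qed
  show ?thesis
  proof
    fix "is"
    show "x t is = y t is"
    proof (cases "is \<in> tidx p (l+1)")
      case True
      have "\<bar>x t is - y t is\<bar> \<le> 0"
        using claim assms(7) True assms(3,4) Mt
        by (intro le_zero_lim[of _ q C]) (auto simp: q_def)
      then show ?thesis by simp
    next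
      case False
      then show ?thesis using sol_out[OF sx assms(7)] sol_out[OF sy assms(7)] by simp
    qed
  qed
qed


lemma zhat_shift:
  assumes i: "is \<in> tidx p (l+1)"
  shows "zhat l p z (t-1) (0 # butlast is) * z t ^ last is = zhat l p z t is"
proof -
  have len: "length is = Suc l" using i by (simp add: tidx_def)
  have ne: "is \<noteq> []" using len by auto
  have P: "(\<Prod>j<l. z (t - 1 - int l + int (Suc j)) ^ (butlast is ! j))
        = (\<Prod>j<l. z (t - int l + int j) ^ (is ! j))"
  proof (intro prod.cong refl)
    fix j assume j: "j \<in> {..<l}"
    have e: "t - 1 - int l + int (Suc j) = t - int l + int j" by simp
    have "butlast is ! j = is ! j" using j len by (simp add: nth_butlast)
    then show "z (t - 1 - int l + int (Suc j)) ^ (butlast is ! j) = z (t - int l + int j) ^ (is ! j)"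
      by (simp only: e)
  qed
  have "zhat l p z (t-1) (0 # butlast is)
      = (\<Prod>j<Suc l. z (t - 1 - int l + int j) ^ ((0 # butlast is) ! j))"
    using tidx_sh[OF i] by (simp add: zhat_def)
  also have "\<dots> = (\<Prod>j<l. z (t - 1 - int l + int (Suc j)) ^ (butlast is ! j))"
    by (simp only: prod.lessThan_Suc_shift) (simp add: algebra_simps)
  finally have A: "zhat l p z (t-1) (0 # butlast is) = (\<Prod>j<l. z (t - int l + int j) ^ (is ! j))"
    using P by simp
  have "zhat l p z t is = (\<Prod>j<Suc l. z (t - int l + int j) ^ (is ! j))"
    using i by (simp add: zhat_def)
  also have "\<dots> = (\<Prod>j<l. z (t - int l + int j) ^ (is ! j)) * z t ^ (is ! l)"
    by (simp only: prod.lessThan_Suc) simp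
  also have "is ! l = last is" using len ne by (simp add: last_conv_nth)
  finally show ?thesis using A by simp
qed

lemma zhat0_eq:
  assumes i: "is \<in> tidx p (l+1)"
  shows "zhat0 l p I0 (z t) is = Dind l I0 is * zhat l p z t is"
proof (cases "\<exists>i\<in>I0. is = replicate l 0 @ [i]")
  case True
  then obtain i where ii: "i \<in> I0" "is = replicate l 0 @ [i]" by blast
  have "zhat l p z t is = (\<Prod>j<Suc l. z (t - int l + int j) ^ (is ! j))"
    using assms by (simp add: zhat_def)
  also have "\<dots> = (\<Prod>j<l. z (t - int l + int j) ^ (is ! j)) * z t ^ (is ! l)"
    by (simp only: prod.lessThan_Suc) simp
  also have "(\<Prod>j<l. z (t - int l + int j) ^ (is ! j)) = 1"
    using ii(2) by (intro prod.neutral) (simp add: nth_append)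
  finally have "zhat l p z t is = z t ^ i" using ii(2) by (simp add: nth_append)
  then show ?thesis using True assms ii by (simp add: zhat0_def Dind_def)
next
  case False
  then show ?thesis by (simp add: zhat0_def Dind_def)
qed

lemma matapply_diag:
  "matapply p k (\<lambda>is js. if is = js then f is else 0) v
     = (\<lambda>is. if is \<in> tidx p k then f is * v is else 0)"
proof
  fix "is"
  show "matapply p k (\<lambda>is js. if is = js then f is else 0) v is
     = (if is \<in> tidx p k then f is * v is else 0)"
  proof (cases "is \<in> tidx p k")
    case True
    have "(\<Sum>js\<in>tidx p k. (if is = js then f is else 0) * v js)
        = (\<Sum>js\<in>tidx p k. if is = js then f is * v js else 0)"
      by (intro sum.cong) auto
    also have "\<dots> = f is * v is" using True tidx_finite by simp
    finally show ?thesis using True by (simp add: matapply_def)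
  qed (simp add: matapply_def)
qed

lemma zhat_out: "is \<notin> tidx p (l+1) \<Longrightarrow> zhat l p z t is = 0"
  by (simp add: zhat_def)

lemma zhat_bound:
  assumes "z \<in> KM M" "M > 0" "t \<le> 0"
  shows "\<bar>zhat l p z t is\<bar> \<le> Mtilde M p ^ (l+1)"
proof (cases "is \<in> tidx p (l+1)")
  case True
  have "\<bar>zhat l p z t is\<bar> = (\<Prod>j<l+1. \<bar>z (t - int l + int j)\<bar> ^ (is ! j))"
    using True by (simp add: zhat_def abs_prod power_abs abs_mult)
  also have "\<dots> \<le> (\<Prod>j<l+1. Mtilde M p)"
  proof (intro prod_mono conjI)
    fix j assume j: "j \<in> {..<l+1}"
    have "is ! j \<in> set is" using j True by (simp add: tidx_def)
    then have "is ! j \<le> p" using True by (auto simp: tidx_def)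
    moreover have "\<bar>z (t - int l + int j)\<bar> \<le> M"
      using assms j by (auto simp: KM_def)
    ultimately show "\<bar>z (t - int l + int j)\<bar> ^ (is ! j) \<le> Mtilde M p"
      using pow_le_Mtilde assms(2) by blast
  qed simp
  finally show ?thesis by simp
next
  case False
  then show ?thesis using Mtilde_ge1[OF assms(2), of p] by (simp add: zhat_def)
qed

lemma cc_bound:
  assumes "0 < lam" "lam < 1"
  shows "cc lam l I0 is \<le> (\<Sum>k\<le>l. lam^k) + lam^(l+1)/(1-lam)"
proof -
  have "(\<Sum>k\<le>l. lam^k * Dind l I0 ((sh^^k) is)) \<le> (\<Sum>k\<le>l. lam^k)"
    using assms by (intro sum_mono) (simp add: Dind_def)
  then show ?thesis unfolding cc_def by linarith
qed

theorem mainTheorem3: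
  fixes M lam :: real and l p :: nat and I0 :: "nat set"
  assumes "M > 0"
    and "I0 \<subseteq> {0..p}" and "0 \<in> I0" and "card I0 > 1"
    and "0 < lam" and "lam < min 1 (1 / Mtilde M p)"
  shows "\<exists>a :: nat list \<Rightarrow> nat list \<Rightarrow> real.
           mat_invertible p (l+1) a \<and>
           (\<forall>is\<in>tidx p (l+1). \<forall>js\<in>tidx p (l+1). a is js \<ge> 0) \<and>
           (\<forall>z\<in>KM M. \<forall>t\<le>0. U_sigsas lam l p I0 z t = matapply p (l+1) a (zhat l p z t))"
proof -
  have lam1: "lam < 1" using assms(6) by simp
  have Mt: "Mtilde M p \<ge> 1" using Mtilde_ge1 assms(1) by blast
  have q: "lam * Mtilde M p < 1"
    using assms(6) Mt by (simp add: field_simps)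
  define c where "c = cc lam l I0"
  have cpos: "\<And>is. c is > 0" unfolding c_def using cc_pos assms(5) lam1 by blast
  define a where "a = (\<lambda>is js :: nat list. if is = js then c is else 0)"
  define b where "b = (\<lambda>is js :: nat list. if is = js then 1 / c is else 0)"
  have inv: "mat_invertible p (l+1) a"
    unfolding mat_invertible_def
  proof (intro exI[of _ b] conjI ballI)
    fix "is" ks assume i: "is \<in> tidx p (l+1)" and k: "ks \<in> tidx p (l+1)"
    have "(\<Sum>js\<in>tidx p (l+1). a is js * b js ks) = (\<Sum>js\<in>tidx p (l+1). if is = js then a is is * b is ks else 0)"
      by (intro sum.cong) (auto simp: a_def)
    also have "\<dots> = a is is * b is ks" using i tidx_finite by simp
    finally show "(\<Sum>js\<in>tidx p (l+1). a is js * b js ks) = (if is = ks then 1 else 0)"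
      using cpos[of "is"] cpos[of ks] by (simp add: a_def b_def)
    have "(\<Sum>js\<in>tidx p (l+1). b is js * a js ks) = (\<Sum>js\<in>tidx p (l+1). if is = js then b is is * a is ks else 0)"
      by (intro sum.cong) (auto simp: b_def)
    also have "\<dots> = b is is * a is ks" using i tidx_finite by simp
    finally show "(\<Sum>js\<in>tidx p (l+1). b is js * a js ks) = (if is = ks then 1 else 0)"
      using cpos[of "is"] cpos[of ks] by (simp add: a_def b_def)
  qed
  have nonneg: "\<forall>is\<in>tidx p (l+1). \<forall>js\<in>tidx p (l+1). a is js \<ge> 0"
    using cpos by (auto simp: a_def less_imp_le)
  have U: "U_sigsas lam l p I0 z t = matapply p (l+1) a (zhat l p z t)"
    if z: "z \<in> KM M" and t: "t \<le> 0" for z t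
  proof -
    define x where "x = (\<lambda>s. matapply p (l+1) a (zhat l p z s))"
    have xv: "x s is = c is * zhat l p z s is" for s "is"
      by (simp add: x_def a_def matapply_diag zhat_out)
    have sol: "sigsas_solution lam l p I0 z x"
      unfolding sigsas_solution_def
    proof (intro conjI allI impI)
      fix s :: int assume "s \<le> 0"
      show "x s = (\<lambda>is. lam * tensor_vec l p (proj (x (s - 1))) (z s) is + zhat0 l p I0 (z s) is)"
      proof
        fix "is"
        show "x s is = lam * tensor_vec l p (proj (x (s - 1))) (z s) is + zhat0 l p I0 (z s) is"
        proof (cases "is \<in> tidx p (l+1)")
          case False
          then show ?thesis by (simp add: xv zhat_out tensor_vec_def zhat0_def)
        next
          case True
          have len: "length is = l+1" using True by (simp add: tidx_def)
          then have ne: "is \<noteq> []" by auto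
          have "tensor_vec l p (proj (x (s - 1))) (z s) is
              = c (0 # butlast is) * (zhat l p z (s-1) (0 # butlast is) * z s ^ last is)"
            using True by (simp add: tensor_vec_def proj_def xv)
          also have "\<dots> = c (sh is) * zhat l p z s is"
            using zhat_shift[OF True] sh_nonempty[OF ne] by simp
          finally have tv: "tensor_vec l p (proj (x (s - 1))) (z s) is = c (sh is) * zhat l p z s is" .
          have "c is = lam * c (sh is) + Dind l I0 is"
            unfolding c_def using cc_rec[OF len assms(3)] lam1 by simp
          then show ?thesis using tv zhat0_eq[OF True, of I0 z s] xv[of s "is"]
            by (simp add: algebra_simps)
        qed
      qed
    next
      define B where "B = ((\<Sum>k\<le>l. lam^k) + lam^(l+1)/(1-lam)) * Mtilde M p ^ (l+1)"
      show "\<exists>C. \<forall>t\<le>0. tnorm p (l+1) (x t) \<le> C"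
      proof (intro exI allI impI)
        fix s :: int assume s: "s \<le> 0"
        have cb: "\<bar>x s is\<bar> \<le> B" for "is"
        proof -
          have "\<bar>x s is\<bar> = c is * \<bar>zhat l p z s is\<bar>"
            using cpos[of "is"] by (simp add: xv abs_mult)
          also have "\<dots> \<le> ((\<Sum>k\<le>l. lam^k) + lam^(l+1)/(1-lam)) * Mtilde M p ^ (l+1)"
            using cpos[of "is"] cc_bound[OF assms(5) lam1, of l I0 "is"]
              zhat_bound[OF z assms(1) s, of l p "is"]
            by (intro mult_mono) (auto simp: c_def)
          finally show ?thesis by (simp add: B_def)
        qed
        have "(\<Sum>is\<in>tidx p (l+1). (x s is)^2) \<le> (\<Sum>is\<in>tidx p (l+1). B^2)"
        proof (intro sum_mono)
          fix "is"
          have "\<bar>x s is\<bar>^2 \<le> B^2" using cb[of "is"] by (intro power_mono) auto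
          then show "(x s is)^2 \<le> B^2" by simp
        qed
        then show "tnorm p (l+1) (x s) \<le> sqrt (\<Sum>is\<in>tidx p (l+1). B^2)"
          unfolding tnorm_def by (rule real_sqrt_le_mono)
      qed
    qed
    have "(THE v. \<exists>y. sigsas_solution lam l p I0 z y \<and> y t = v) = x t"
    proof (rule the_equality)
      show "\<exists>y. sigsas_solution lam l p I0 z y \<and> y t = x t" using sol by blast
    next
      fix v assume "\<exists>y. sigsas_solution lam l p I0 z y \<and> y t = v"
      then obtain y where "sigsas_solution lam l p I0 z y" "y t = v" by blast
      then show "v = x t" using uniq[OF z assms(1,5) q _ sol t] by blast
    qed
    then show ?thesis by (simp add: U_sigsas_def x_def)
  qed
  show ?thesis using inv nonneg U by blast
qed

end
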